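(* Let $\Gamma=\{\gamma_0=\mathrm{id},\dots,\gamma_{t-1}\}$ be a finite group, $\phi:\Gamma\to\operatorname{Aut}(G)$ and $\tau:\Gamma\to O(\mathbb{R}^3)$ homomorphisms with $\tau(\gamma)\mathcal{Y}=\mathcal{Y}$, and $G$ a $\Gamma$-symmetric graph. Let $H\le G$ be a subgraph isomorphic to $K_4$ such that $V(\phi(\gamma)H)\cap V(H)=\emptyset$ for every $\gamma\ne\mathrm{id}$. Let $G//\{\phi(\gamma_i)H\}_{i=0}^{t-1}$ denote the graph obtained from $G$ by contracting each of the $t$ copies $\phi(\gamma_i)H$ to a single vertex (deleting the edges inside each copy), with the induced $\Gamma$-action, and assume this graph is simple. If $G//\{\phi(\gamma_i)H\}_{i=0}^{t-1}$ is $\tau(\Gamma)$-rigid on $\mathcal{Y}$, then $G$ is $\tau(\Gamma)$-rigid on $\mathcal{Y}$.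
   Context: $\mathcal{Y}=\{(x,y,z):x^2+y^2=1\}$. A framework on $\mathcal{Y}$ is $(G,p)$, $G$ finite simple, $p:V\to\mathcal{Y}$, $p(u)\neq p(v)$ for edges $uv$. Its rigidity matrix $R_{\mathcal{Y}}(G,p)$ is the $(|E|+|V|)\times 3|V|$ matrix with a row for each edge $v_iv_j$ having $p(v_i)-p(v_j)$ in the columns of $v_i$ and $p(v_j)-p(v_i)$ in those of $v_j$, and a row for each vertex $v_i$ with $p(v_i)=(x_i,y_i,z_i)$ having $(x_i,y_i,0)$ in the columns of $v_i$ (zeros elsewhere). The framework is infinitesimally rigid if every kernel vector $u$ has the form $u_i=(0,0,a)+b(-y_i,x_i,0)$. A framework is $\Gamma$-symmetric w.r.t. $\phi,\tau$ if $\tau(\gamma)p(v)=p(\phi(\gamma)v)$. $G$ is $\tau(\Gamma)$-rigid on $\mathcal{Y}$ if some $\Gamma$-symmetric framework $(G,p)$ on $\mathcal{Y}$ w.r.t. $\phi,\tau$ is infinitesimally rigid. *)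

theory Defs
  imports "HOL-Algebra.Group" "HOL-Analysis.Analysis"
begin

definition cylinder :: "(real^3) set" where
  "cylinder = {q. (q$1)^2 + (q$2)^2 = 1}"

definition simple_graph :: "'v set \<Rightarrow> 'v set set \<Rightarrow> bool" where
  "simple_graph V E \<longleftrightarrow> finite V \<and>
     (\<forall>e\<in>E. \<exists>a b. a \<in> V \<and> b \<in> V \<and> a \<noteq> b \<and> e = {a, b})"

definition graph_aut :: "'v set \<Rightarrow> 'v set set \<Rightarrow> ('v \<Rightarrow> 'v) \<Rightarrow> bool" where
  "graph_aut V E f \<longleftrightarrow> bij_betw f V V \<and>
     (\<forall>a\<in>V. \<forall>b\<in>V. {a, b} \<in> E \<longleftrightarrow> {f a, f b} \<in> E)"

definition sym_graph :: "('g, 'm) monoid_scheme \<Rightarrow> 'v set \<Rightarrow> 'v set set \<Rightarrow> ('g \<Rightarrow> 'v \<Rightarrow> 'v) \<Rightarrow> bool" where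
  "sym_graph Gam V E \<phi> \<longleftrightarrow>
     (\<forall>g\<in>carrier Gam. graph_aut V E (\<phi> g)) \<and>
     (\<forall>g\<in>carrier Gam. \<forall>h\<in>carrier Gam. \<forall>v\<in>V. \<phi> (g \<otimes>\<^bsub>Gam\<^esub> h) v = \<phi> g (\<phi> h v))"

definition cyl_sym_rep :: "('g, 'm) monoid_scheme \<Rightarrow> ('g \<Rightarrow> real^3 \<Rightarrow> real^3) \<Rightarrow> bool" where
  "cyl_sym_rep Gam \<tau> \<longleftrightarrow>
     (\<forall>g\<in>carrier Gam. orthogonal_transformation (\<tau> g) \<and> \<tau> g ` cylinder = cylinder) \<and>
     (\<forall>g\<in>carrier Gam. \<forall>h\<in>carrier Gam. \<tau> (g \<otimes>\<^bsub>Gam\<^esub> h) = \<tau> g \<circ> \<tau> h)"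

definition cyl_framework :: "'v set \<Rightarrow> 'v set set \<Rightarrow> ('v \<Rightarrow> real^3) \<Rightarrow> bool" where
  "cyl_framework V E p \<longleftrightarrow> (\<forall>v\<in>V. p v \<in> cylinder) \<and>
     (\<forall>a b. {a, b} \<in> E \<longrightarrow> p a \<noteq> p b)"

text \<open>u (restricted to V) lies in the kernel of the rigidity matrix R_Y(G,p):
  edge row v_i v_j gives (p_i - p_j).u_i + (p_j - p_i).u_j = 0,
  vertex row v_i gives (x_i, y_i, 0).u_i = 0.\<close>
definition cyl_inf_motion :: "'v set \<Rightarrow> 'v set set \<Rightarrow> ('v \<Rightarrow> real^3) \<Rightarrow> ('v \<Rightarrow> real^3) \<Rightarrow> bool" where
  "cyl_inf_motion V E p u \<longleftrightarrow>
     (\<forall>a b. {a, b} \<in> E \<longrightarrow> (p a - p b) \<bullet> u a + (p b - p a) \<bullet> u b = 0) \<and>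
     (\<forall>v\<in>V. vector [p v $ 1, p v $ 2, 0] \<bullet> u v = 0)"

definition cyl_inf_rigid :: "'v set \<Rightarrow> 'v set set \<Rightarrow> ('v \<Rightarrow> real^3) \<Rightarrow> bool" where
  "cyl_inf_rigid V E p \<longleftrightarrow>
     (\<forall>u. cyl_inf_motion V E p u \<longrightarrow>
        (\<exists>a b::real. \<forall>v\<in>V. u v = vector [0, 0, a] + b *\<^sub>R vector [- (p v $ 2), p v $ 1, 0]))"

definition sym_framework :: "('g, 'm) monoid_scheme \<Rightarrow> 'v set \<Rightarrow> ('g \<Rightarrow> 'v \<Rightarrow> 'v)
    \<Rightarrow> ('g \<Rightarrow> real^3 \<Rightarrow> real^3) \<Rightarrow> ('v \<Rightarrow> real^3) \<Rightarrow> bool" where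
  "sym_framework Gam V \<phi> \<tau> p \<longleftrightarrow> (\<forall>g\<in>carrier Gam. \<forall>v\<in>V. \<tau> g (p v) = p (\<phi> g v))"

definition tau_rigid :: "('g, 'm) monoid_scheme \<Rightarrow> 'v set \<Rightarrow> 'v set set \<Rightarrow> ('g \<Rightarrow> 'v \<Rightarrow> 'v)
    \<Rightarrow> ('g \<Rightarrow> real^3 \<Rightarrow> real^3) \<Rightarrow> bool" where
  "tau_rigid Gam V E \<phi> \<tau> \<longleftrightarrow>
     (\<exists>p. cyl_framework V E p \<and> sym_framework Gam V \<phi> \<tau> p \<and> cyl_inf_rigid V E p)"

text \<open>Contraction of the copies phi(gamma) H, H having vertex set S.
  A vertex v is sent to the copy containing it, or to {v} if it lies in no copy.\<close>
definition contr_class :: "('g, 'm) monoid_scheme \<Rightarrow> ('g \<Rightarrow> 'v \<Rightarrow> 'v) \<Rightarrow> 'v set \<Rightarrow> 'v \<Rightarrow> 'v set" where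
  "contr_class Gam \<phi> S v = insert v (\<Union>{\<phi> g ` S | g. g \<in> carrier Gam \<and> v \<in> \<phi> g ` S})"

definition contr_V :: "('g, 'm) monoid_scheme \<Rightarrow> 'v set \<Rightarrow> ('g \<Rightarrow> 'v \<Rightarrow> 'v) \<Rightarrow> 'v set \<Rightarrow> 'v set set" where
  "contr_V Gam V \<phi> S = contr_class Gam \<phi> S ` V"

definition contr_E :: "('g, 'm) monoid_scheme \<Rightarrow> 'v set set \<Rightarrow> ('g \<Rightarrow> 'v \<Rightarrow> 'v) \<Rightarrow> 'v set \<Rightarrow> 'v set set set" where
  "contr_E Gam E \<phi> S = {{contr_class Gam \<phi> S a, contr_class Gam \<phi> S b} | a b.
      {a, b} \<in> E \<and> contr_class Gam \<phi> S a \<noteq> contr_class Gam \<phi> S b}"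

definition contr_simple :: "('g, 'm) monoid_scheme \<Rightarrow> 'v set set \<Rightarrow> ('g \<Rightarrow> 'v \<Rightarrow> 'v) \<Rightarrow> 'v set \<Rightarrow> bool" where
  "contr_simple Gam E \<phi> S \<longleftrightarrow>
     (\<forall>a b c d. {a, b} \<in> E \<and> {c, d} \<in> E \<and>
        contr_class Gam \<phi> S a \<noteq> contr_class Gam \<phi> S b \<and>
        {contr_class Gam \<phi> S a, contr_class Gam \<phi> S b} = {contr_class Gam \<phi> S c, contr_class Gam \<phi> S d}
        \<longrightarrow> {a, b} = {c, d})"

definition contr_action :: "('g \<Rightarrow> 'v \<Rightarrow> 'v) \<Rightarrow> 'g \<Rightarrow> 'v set \<Rightarrow> 'v set" where
  "contr_action \<phi> g X = \<phi> g ` X"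

end

theory Submission
  imports Defs "HOL-Analysis.Analysis"
begin


definition kap :: "real^3 \<Rightarrow> real^3 \<Rightarrow> real" where
  "kap P Q = P$1 * Q$2 - P$2 * Q$1"
definition Jv :: "real^3 \<Rightarrow> real^3" where
  "Jv P = vector [- (P$2), P$1, 0]"
definition e3 :: "real^3" where "e3 = vector [0,0,1]"
definition Rot :: "real \<Rightarrow> real^3 \<Rightarrow> real^3" where
  "Rot t q = vector [q$1 * cos t - q$2 * sin t, q$1 * sin t + q$2 * cos t, q$3]"
definition Sh :: "real \<Rightarrow> real^3 \<Rightarrow> real^3" where
  "Sh t q = vector [q$1, q$2, q$3 + t]"

definition motAB :: "'v set set \<Rightarrow> ('v \<Rightarrow> real^3) \<Rightarrow> ('v \<Rightarrow> real) \<Rightarrow> ('v \<Rightarrow> real) \<Rightarrow> bool" where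
  "motAB E p al be \<longleftrightarrow> (\<forall>a b. {a,b} \<in> E \<longrightarrow>
      - kap (p a) (p b) * (al a - al b) + (p a $ 3 - p b $ 3) * (be a - be b) = 0)"

lemma inner3: "(x::real^3) \<bullet> y = x$1*y$1 + x$2*y$2 + x$3*y$3"
  by (simp add: inner_vec_def sum_3)

lemma edge_id:
  "(P - Q) \<bullet> (a *\<^sub>R Jv P + b *\<^sub>R e3) + (Q - P) \<bullet> (a' *\<^sub>R Jv Q + b' *\<^sub>R e3)
   = - kap P Q * (a - a') + (P$3 - Q$3) * (b - b')"
  by (simp add: inner3 Jv_def e3_def kap_def algebra_simps)

lemma vert_id: "vector [P$1, P$2, 0] \<bullet> (a *\<^sub>R Jv P + b *\<^sub>R e3) = 0"
  by (simp add: inner3 Jv_def e3_def algebra_simps)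

lemma cyl_iff: "q \<in> cylinder \<longleftrightarrow> (q$1)^2 + (q$2)^2 = 1"
  by (simp add: cylinder_def)

lemma Rot_cyl: "Rot t q \<in> cylinder \<longleftrightarrow> q \<in> cylinder"
proof -
  have "(q$1 * cos t - q$2 * sin t)^2 + (q$1 * sin t + q$2 * cos t)^2 = ((q$1)^2 + (q$2)^2) * ((sin t)^2 + (cos t)^2)"
    by algebra
  then show ?thesis by (simp add: cyl_iff Rot_def)
qed

lemma Sh_cyl: "Sh t q \<in> cylinder \<longleftrightarrow> q \<in> cylinder"
  by (simp add: cyl_iff Sh_def)

lemma Rot0: "Rot 0 q = q" by (simp add: Rot_def vec_eq_iff forall_3)
lemma Sh0: "Sh 0 q = q" by (simp add: Sh_def vec_eq_iff forall_3)

lemma fromAB: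
  assumes "motAB E p al be"
  shows "cyl_inf_motion V E p (\<lambda>v. al v *\<^sub>R Jv (p v) + be v *\<^sub>R e3)"
  using assms unfolding cyl_inf_motion_def motAB_def
  by (simp add: edge_id vert_id)

lemma decomp:
  assumes "(P$1)^2 + (P$2)^2 = 1" "vector [P$1, P$2, 0] \<bullet> u = 0"
  shows "u = (- (P$2) * u$1 + P$1 * u$2) *\<^sub>R Jv P + (u$3) *\<^sub>R e3"
proof -
  have h: "P$1 * u$1 + P$2 * u$2 = 0" using assms(2) by (simp add: inner3)
  have 1: "u$1 - (- (P$2) * u$1 + P$1 * u$2) * (- P$2) = u$1 * (1 - ((P$1)^2 + (P$2)^2)) + P$1 * (P$1 * u$1 + P$2 * u$2)"
    by (simp add: power2_eq_square algebra_simps)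
  have 2: "u$2 - (- (P$2) * u$1 + P$1 * u$2) * (P$1) = u$2 * (1 - ((P$1)^2 + (P$2)^2)) + P$2 * (P$1 * u$1 + P$2 * u$2)"
    by (simp add: power2_eq_square algebra_simps)
  show ?thesis using 1 2 h assms(1)
    by (simp add: vec_eq_iff forall_3 Jv_def e3_def)
qed




lemma lin3:
  fixes T :: "real^3 \<Rightarrow> 'b::real_vector" and x :: "real^3"
  assumes "linear T"
  shows "T x = x$1 *\<^sub>R T (axis 1 1) + x$2 *\<^sub>R T (axis 2 1) + x$3 *\<^sub>R T (axis 3 1)"
proof -
  have "x = x$1 *\<^sub>R axis 1 1 + x$2 *\<^sub>R axis 2 1 + x$3 *\<^sub>R (axis 3 1 :: real^3)"
    by (simp add: vec_eq_iff forall_3 axis_def)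
  then have "T x = T (x$1 *\<^sub>R axis 1 1 + x$2 *\<^sub>R axis 2 1 + x$3 *\<^sub>R (axis 3 1 :: real^3))" by simp
  also have "\<dots> = x$1 *\<^sub>R T (axis 1 1) + x$2 *\<^sub>R T (axis 2 1) + x$3 *\<^sub>R T (axis 3 1)"
    using assms by (simp add: linear_add linear_scale)
  finally show ?thesis .
qed

lemma Tstruct:
  assumes T: "orthogonal_transformation T" and C: "T ` cylinder = cylinder"
  shows "\<exists>d c. d \<noteq> 0 \<and> c \<noteq> 0 \<and> (\<forall>x y. kap (T x) (T y) = d * kap x y) \<and> (\<forall>x. T x $ 3 = c * x $ 3)"
proof -
  have lin: "linear T" using T by (simp add: orthogonal_transformation_def)
  have ip: "\<And>v w. T v \<bullet> T w = v \<bullet> w" using T by (simp add: orthogonal_transformation_def)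
  define a where "a = T (axis 1 1)"
  define b where "b = T (axis 2 1)"
  define c where "c = T (axis 3 1)"
  have Tx0: "\<And>x. T x = x$1 *\<^sub>R a + x$2 *\<^sub>R b + x$3 *\<^sub>R c"
    unfolding a_def b_def c_def by (rule lin3[OF lin])
  have Tx: "\<And>x i. T x $ i = x$1 * a$i + x$2 * b$i + x$3 * c$i"
    by (simp add: Tx0)
  have cyl: "\<And>t. (a$1 + t * c$1)^2 + (a$2 + t * c$2)^2 = 1"
  proof -
    fix t :: real
    have "vector [1, 0, t] \<in> cylinder" by (simp add: cyl_iff)
    then have "T (vector [1,0,t]) \<in> cylinder" using C by blast
    then show "(a$1 + t * c$1)^2 + (a$2 + t * c$2)^2 = 1" by (simp add: cyl_iff Tx)
  qed
  have "(a$1 + 1 * c$1)^2 + (a$2 + 1 * c$2)^2 + ((a$1 + (-1) * c$1)^2 + (a$2 + (-1) * c$2)^2)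
        - 2 * ((a$1 + 0 * c$1)^2 + (a$2 + 0 * c$2)^2) = 0"
    using cyl[of 1] cyl[of "-1"] cyl[of 0] by simp
  then have "2 * ((c$1)^2 + (c$2)^2) = 0" by (simp add: power2_eq_square algebra_simps)
  then have "(c$1)^2 + (c$2)^2 = 0" by (metis mult_eq_0_iff zero_neq_numeral)
  then have c12: "c$1 = 0" "c$2 = 0" by (simp_all add: sum_power2_eq_zero_iff)
  have n: "\<And>i j. (axis i 1 :: real^3) \<bullet> axis j 1 = (if i = j then 1 else 0)"
    by (simp add: inner_axis_axis)
  have aa: "a \<bullet> a = 1" "b \<bullet> b = 1" "c \<bullet> c = 1" "a \<bullet> b = 0" "a \<bullet> c = 0" "b \<bullet> c = 0"
    unfolding a_def b_def c_def ip n by simp_all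
  have c3: "(c$3)^2 = 1" using aa(3) c12 by (simp add: inner3 power2_eq_square)
  then have c3n: "c$3 \<noteq> 0" by auto
  have a3: "a$3 = 0" using aa(5) c12 c3n by (simp add: inner3)
  have b3: "b$3 = 0" using aa(6) c12 c3n by (simp add: inner3)
  define d where "d = a$1 * b$2 - a$2 * b$1"
  have "d^2 = ((a$1)^2 + (a$2)^2) * ((b$1)^2 + (b$2)^2) - (a$1*b$1 + a$2*b$2)^2"
    unfolding d_def by algebra
  also have "\<dots> = 1" using aa(1,2,4) a3 b3 by (simp add: inner3 power2_eq_square)
  finally have "d \<noteq> 0" by auto
  moreover have "\<forall>x y. kap (T x) (T y) = d * kap x y"
    by (simp add: kap_def Tx d_def a3 b3 c12 algebra_simps)
  moreover have "\<forall>x. T x $ 3 = c$3 * x $ 3" by (simp add: Tx a3 b3)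
  ultimately show ?thesis using c3n by blast
qed





lemma K4_base:
  fixes q :: "real^3"
  assumes q: "(q$1)^2 + (q$2)^2 = 1" and e: "0 < e" "e < pi" and d: "d \<noteq> 0" and c: "c \<noteq> 0"
  defines "Q1 \<equiv> q" and "Q2 \<equiv> Sh e q" and "Q3 \<equiv> Rot e q" and "Q4 \<equiv> Sh e (Rot (-e) q)"
  assumes e12: "- (d * kap Q1 Q2) * (a1 - a2) + c * (Q1$3 - Q2$3) * (b1 - b2) = 0"
    and e13: "- (d * kap Q1 Q3) * (a1 - a3) + c * (Q1$3 - Q3$3) * (b1 - b3) = 0"
    and e14: "- (d * kap Q1 Q4) * (a1 - a4) + c * (Q1$3 - Q4$3) * (b1 - b4) = 0"
    and e23: "- (d * kap Q2 Q3) * (a2 - a3) + c * (Q2$3 - Q3$3) * (b2 - b3) = 0"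
    and e24: "- (d * kap Q2 Q4) * (a2 - a4) + c * (Q2$3 - Q4$3) * (b2 - b4) = 0"
    and e34: "- (d * kap Q3 Q4) * (a3 - a4) + c * (Q3$3 - Q4$3) * (b3 - b4) = 0"
  shows "a2 = a1 \<and> a3 = a1 \<and> a4 = a1 \<and> b2 = b1 \<and> b3 = b1 \<and> b4 = b1"
proof -
  define s where "s = sin e"
  define co where "co = cos e"
  have s: "s \<noteq> 0" unfolding s_def using e sin_gt_zero by fastforce
  have co: "co \<noteq> 1" unfolding co_def using e cos_monotone_0_pi[of 0 e] by (metis cos_zero less_eq_real_def order_less_irrefl) 
  have k12: "kap Q1 Q2 = 0" by (simp add: Q1_def Q2_def Sh_def kap_def)
  have k13: "kap Q1 Q3 = s"
  proof -
    have "kap Q1 Q3 = s * ((q$1)^2 + (q$2)^2)"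
      by (simp add: Q1_def Q3_def Rot_def kap_def s_def power2_eq_square algebra_simps)
    then show ?thesis using q by simp
  qed
  have k14: "kap Q1 Q4 = - s"
  proof -
    have "kap Q1 Q4 = - s * ((q$1)^2 + (q$2)^2)"
      by (simp add: Q1_def Q4_def Rot_def Sh_def kap_def s_def power2_eq_square algebra_simps)
    then show ?thesis using q by simp
  qed
  have k23: "kap Q2 Q3 = s"
  proof -
    have "kap Q2 Q3 = s * ((q$1)^2 + (q$2)^2)"
      by (simp add: Q2_def Q3_def Rot_def Sh_def kap_def s_def power2_eq_square algebra_simps)
    then show ?thesis using q by simp
  qed
  have k24: "kap Q2 Q4 = - s"
  proof -
    have "kap Q2 Q4 = - s * ((q$1)^2 + (q$2)^2)"
      by (simp add: Q2_def Q4_def Rot_def Sh_def kap_def s_def power2_eq_square algebra_simps)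
    then show ?thesis using q by simp
  qed
  have k34: "kap Q3 Q4 = - 2 * s * co"
  proof -
    have "kap Q3 Q4 = - 2 * s * co * ((q$1)^2 + (q$2)^2)"
      by (simp add: Q3_def Q4_def Rot_def Sh_def kap_def s_def co_def power2_eq_square algebra_simps)
    then show ?thesis using q by simp
  qed
  have z: "Q1$3 = q$3" "Q2$3 = q$3 + e" "Q3$3 = q$3" "Q4$3 = q$3 + e"
    by (simp_all add: Q1_def Q2_def Q3_def Q4_def Rot_def Sh_def)
  have ee: "e \<noteq> 0" using e by simp
  from e12 have B12: "b2 = b1" using c ee by (simp add: k12 z)
  from e13 have A13: "a3 = a1" using d s by (simp add: k13 z)
  from e24 have A24: "a4 = a2" using d s by (simp add: k24 z)
  from e14 have E14: "d * s * (a1 - a2) = c * e * (b1 - b4)" using A24 by (simp add: k14 z algebra_simps)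
  from e23 have E23: "d * s * (a1 - a2) = - c * e * (b1 - b3)" using A13 B12 by (simp add: k23 z algebra_simps)
  from e34 have E34: "2 * d * s * co * (a1 - a2) = c * e * (b3 - b4)" using A13 A24 by (simp add: k34 z algebra_simps)
  have "c * e * (b3 - b4) = c * e * (b1 - b4) - c * e * (b1 - b3)" by (simp add: algebra_simps)
  then have "2 * d * s * co * (a1 - a2) = 2 * (d * s * (a1 - a2))" using E14 E23 E34 by simp
  then have "(d * s * (a1 - a2)) * (co - 1) = 0" by (simp add: algebra_simps)
  then have A12: "a1 = a2" using d s co by simp
  have B14: "b4 = b1" using E14 A12 c ee by simp
  have B13: "b3 = b1" using E23 A12 c ee by simp
  show ?thesis using A12 A13 A24 B12 B13 B14 by simp
qed





lemma BW_finite: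
  fixes f :: "nat \<Rightarrow> 'v \<Rightarrow> real"
  assumes "finite A" and bd: "\<And>k x. x \<in> A \<Longrightarrow> \<bar>f k x\<bar> \<le> B"
  shows "\<exists>r l. strict_mono r \<and> (\<forall>x\<in>A. (\<lambda>k. f (r k) x) \<longlonglongrightarrow> l x)"
  using assms(1) bd
proof (induction A rule: finite_induct)
  case empty
  show ?case by (rule exI[of _ id]) (auto simp: strict_mono_def)
next
  case (insert y F)
  then obtain r1 l1 where r1: "strict_mono r1" and l1: "\<forall>x\<in>F. (\<lambda>k. f (r1 k) x) \<longlonglongrightarrow> l1 x"
    by blast
  have hb: "\<forall>n. f (r1 n) y \<in> {-B..B}"
  proof
    fix n
    have "\<bar>f (r1 n) y\<bar> \<le> B" using insert.prems by simp
    then show "f (r1 n) y \<in> {-B..B}" by (auto simp: abs_le_iff)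
  qed
  obtain ly r2 where "ly \<in> {-B..B}" and r2: "strict_mono r2" and ly: "((\<lambda>n. f (r1 n) y) \<circ> r2) \<longlonglongrightarrow> ly"
    by (rule seq_compactE[OF compact_imp_seq_compact[OF compact_Icc] hb])
  show ?case
  proof (intro exI conjI)
    show "strict_mono (r1 \<circ> r2)" by (metis r1 r2 strict_mono_o)
    show "\<forall>x\<in>insert y F. (\<lambda>k. f ((r1 \<circ> r2) k) x) \<longlonglongrightarrow> (l1(y := ly)) x"
    proof
      fix x assume "x \<in> insert y F"
      show "(\<lambda>k. f ((r1 \<circ> r2) k) x) \<longlonglongrightarrow> (l1(y := ly)) x"
      proof (cases "x = y")
        case True then show ?thesis using ly by (simp add: comp_def)
      next
        case False
        then have "x \<in> F" using \<open>x \<in> insert y F\<close> by simp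
        then have "((\<lambda>k. f (r1 k) x) \<circ> r2) \<longlonglongrightarrow> l1 x" using l1 r2 LIMSEQ_subseq_LIMSEQ by blast
        then show ?thesis using False by (simp add: comp_def)
      qed
    qed
  qed
qed

lemma tendsto_vector3:
  assumes "(f \<longlongrightarrow> a) F" "(g \<longlongrightarrow> b) F" "(h \<longlongrightarrow> c) F"
  shows "((\<lambda>x. vector [f x, g x, h x] :: real^3) \<longlongrightarrow> vector [a, b, c]) F"
proof (rule vec_tendstoI)
  fix i :: 3
  have "i = 1 \<or> i = 2 \<or> i = 3" by (rule exhaust_3)
  then show "((\<lambda>x. (vector [f x, g x, h x] :: real^3) $ i) \<longlongrightarrow> (vector [a, b, c] :: real^3) $ i) F"
  proof (elim disjE)
    assume "i = 1" then show ?thesis using assms(1) by (simp only: vector_3)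
  next
    assume "i = 2" then show ?thesis using assms(2) by (simp only: vector_3)
  next
    assume "i = 3" then show ?thesis using assms(3) by (simp only: vector_3)
  qed
qed

lemma Rot_tendsto:
  fixes e :: "'a::t2_space \<Rightarrow> real"
  assumes a: "(e \<longlongrightarrow> 0) F"
  shows "((\<lambda>x. Rot (e x) q) \<longlongrightarrow> q) F"
proof -
  have c: "((\<lambda>x. cos (e x)) \<longlongrightarrow> 1) F" using tendsto_cos[OF a] by (simp only: cos_zero)
  have s: "((\<lambda>x. sin (e x)) \<longlongrightarrow> 0) F" using tendsto_sin[OF a] by (simp only: sin_zero)
  have 1: "((\<lambda>x. q$1 * cos (e x) - q$2 * sin (e x)) \<longlongrightarrow> q$1 * 1 - q$2 * 0) F"
    by (intro tendsto_diff tendsto_mult tendsto_const c s)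
  have 2: "((\<lambda>x. q$1 * sin (e x) + q$2 * cos (e x)) \<longlongrightarrow> q$1 * 0 + q$2 * 1) F"
    by (intro tendsto_add tendsto_mult tendsto_const c s)
  have "((\<lambda>x. Rot (e x) q) \<longlongrightarrow> vector [q$1 * 1 - q$2 * 0, q$1 * 0 + q$2 * 1, q$3]) F"
    unfolding Rot_def by (rule tendsto_vector3[OF 1 2 tendsto_const])
  moreover have "vector [q$1 * 1 - q$2 * 0, q$1 * 0 + q$2 * 1, q$3] = q" by (simp add: vec_eq_iff forall_3)
  ultimately show ?thesis by simp
qed

lemma Rot_tendsto':
  fixes e :: "'a::t2_space \<Rightarrow> real"
  assumes a: "(e \<longlongrightarrow> 0) F"
  shows "((\<lambda>x. Rot (- e x) q) \<longlongrightarrow> q) F"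
proof -
  have "((\<lambda>x. - e x) \<longlongrightarrow> - 0) F" by (rule tendsto_minus[OF a])
  then have "((\<lambda>x. - e x) \<longlongrightarrow> 0) F" by (simp only: minus_zero)
  then show ?thesis by (rule Rot_tendsto)
qed

lemma Sh_tendsto: "(e \<longlongrightarrow> 0) F \<Longrightarrow> (g \<longlongrightarrow> q) F \<Longrightarrow> ((\<lambda>x. Sh (e x) (g x)) \<longlongrightarrow> q) F"
proof -
  assume a: "(e \<longlongrightarrow> 0) F" "(g \<longlongrightarrow> q) F"
  have 1: "((\<lambda>x. g x $ 1) \<longlongrightarrow> q $ 1) F" by (rule tendsto_vec_nth[OF a(2)])
  have 2: "((\<lambda>x. g x $ 2) \<longlongrightarrow> q $ 2) F" by (rule tendsto_vec_nth[OF a(2)])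
  have 3: "((\<lambda>x. g x $ 3 + e x) \<longlongrightarrow> q $ 3 + 0) F" by (rule tendsto_add[OF tendsto_vec_nth[OF a(2)] a(1)])
  have "((\<lambda>x. Sh (e x) (g x)) \<longlongrightarrow> vector [q$1, q$2, q$3 + 0]) F"
    unfolding Sh_def by (rule tendsto_vector3[OF 1 2 3])
  moreover have "vector [q$1, q$2, q$3 + 0] = q" by (simp add: vec_eq_iff forall_3)
  ultimately show ?thesis by (simp only:)
qed

lemma orth_tendsto:
  fixes T :: "real^3 \<Rightarrow> real^3"
  assumes "orthogonal_transformation T" "(f \<longlongrightarrow> a) F"
  shows "((\<lambda>x. T (f x)) \<longlongrightarrow> T a) F"
proof -
  have "linear T" by (rule orthogonal_transformation_linear[OF assms(1)])
  then have "bounded_linear T" using linear_conv_bounded_linear[of T] by (simp only:)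
  then show ?thesis using assms(2) by (rule bounded_linear.tendsto)
qed




lemma K4_conv:
  assumes "\<forall>x y. kap (T x) (T y) = d * kap x y" "\<forall>x. T x $ 3 = c * x $ 3"
    and "- kap (T x) (T y) * A + (T x $ 3 - T y $ 3) * B = 0"
  shows "- (d * kap x y) * A + c * (x$3 - y$3) * B = 0"
  using assms by (simp add: right_diff_distrib)

locale Lsetup = G: group Gam
  for Gam :: "('g, 'm) monoid_scheme" +
  fixes V :: "'v set" and E :: "'v set set"
    and \<phi> :: "'g \<Rightarrow> 'v \<Rightarrow> 'v" and \<tau> :: "'g \<Rightarrow> real^3 \<Rightarrow> real^3"
    and S :: "'v set" and p' :: "'v set \<Rightarrow> real^3" and s1 s2 s3 s4 :: 'v
  assumes sg: "simple_graph V E" and sym: "sym_graph Gam V E \<phi>" and rep: "cyl_sym_rep Gam \<tau>"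
    and SV: "S \<subseteq> V" and Sdef: "S = {s1, s2, s3, s4}" and dist: "distinct [s1, s2, s3, s4]"
    and K4: "\<forall>a\<in>S. \<forall>b\<in>S. a \<noteq> b \<longrightarrow> {a, b} \<in> E"
    and free: "\<forall>g\<in>carrier Gam. g \<noteq> \<one>\<^bsub>Gam\<^esub> \<longrightarrow> \<phi> g ` S \<inter> S = {}"
    and fw: "cyl_framework (contr_V Gam V \<phi> S) (contr_E Gam E \<phi> S) p'"
    and sf: "sym_framework Gam (contr_V Gam V \<phi> S) (contr_action \<phi>) \<tau> p'"
    and ri: "cyl_inf_rigid (contr_V Gam V \<phi> S) (contr_E Gam E \<phi> S) p'"
begin

abbreviation "cls \<equiv> contr_class Gam \<phi> S"
abbreviation "V' \<equiv> contr_V Gam V \<phi> S"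
abbreviation "E' \<equiv> contr_E Gam E \<phi> S"

lemma phi_V: "g \<in> carrier Gam \<Longrightarrow> v \<in> V \<Longrightarrow> \<phi> g v \<in> V"
  using sym unfolding sym_graph_def graph_aut_def bij_betw_def by blast

lemma phi_inj: "g \<in> carrier Gam \<Longrightarrow> v \<in> V \<Longrightarrow> w \<in> V \<Longrightarrow> \<phi> g v = \<phi> g w \<Longrightarrow> v = w"
  using sym unfolding sym_graph_def graph_aut_def bij_betw_def inj_on_def by blast

lemma phi_mult: "g \<in> carrier Gam \<Longrightarrow> h \<in> carrier Gam \<Longrightarrow> v \<in> V \<Longrightarrow> \<phi> (g \<otimes>\<^bsub>Gam\<^esub> h) v = \<phi> g (\<phi> h v)"
  using sym unfolding sym_graph_def by blast

lemma phi_one: "v \<in> V \<Longrightarrow> \<phi> \<one>\<^bsub>Gam\<^esub> v = v"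
proof -
  assume v: "v \<in> V"
  have "\<phi> \<one>\<^bsub>Gam\<^esub> (\<phi> \<one>\<^bsub>Gam\<^esub> v) = \<phi> \<one>\<^bsub>Gam\<^esub> v"
    using phi_mult[of "\<one>\<^bsub>Gam\<^esub>" "\<one>\<^bsub>Gam\<^esub>" v] v by simp
  then show ?thesis using phi_inj[of "\<one>\<^bsub>Gam\<^esub>" "\<phi> \<one>\<^bsub>Gam\<^esub> v" v] phi_V v by simp
qed

lemma phi_inv: "g \<in> carrier Gam \<Longrightarrow> v \<in> V \<Longrightarrow> \<phi> (inv\<^bsub>Gam\<^esub> g) (\<phi> g v) = v"
  using phi_mult[of "inv\<^bsub>Gam\<^esub> g" g v] phi_one by simp

lemma phi_edge: "g \<in> carrier Gam \<Longrightarrow> a \<in> V \<Longrightarrow> b \<in> V \<Longrightarrow> {a, b} \<in> E \<Longrightarrow> {\<phi> g a, \<phi> g b} \<in> E"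
  using sym unfolding sym_graph_def graph_aut_def by blast

lemma uniq:
  assumes g: "g \<in> carrier Gam" and h: "h \<in> carrier Gam" and s: "s \<in> S" and s': "s' \<in> S"
    and eq: "\<phi> g s = \<phi> h s'"
  shows "g = h \<and> s = s'"
proof -
  have sV: "s \<in> V" "s' \<in> V" using s s' SV by auto
  have "\<phi> (inv\<^bsub>Gam\<^esub> h \<otimes>\<^bsub>Gam\<^esub> g) s = s'"
    using phi_mult[of "inv\<^bsub>Gam\<^esub> h" g s] phi_inv[of h s'] eq g h sV by simp
  then have "\<phi> (inv\<^bsub>Gam\<^esub> h \<otimes>\<^bsub>Gam\<^esub> g) ` S \<inter> S \<noteq> {}" using s s' by blast
  then have "inv\<^bsub>Gam\<^esub> h \<otimes>\<^bsub>Gam\<^esub> g = \<one>\<^bsub>Gam\<^esub>" using free g h by blast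
  then have gh: "g = h" using g h by (metis G.inv_closed G.inv_equality G.inv_inv)
  then show ?thesis using eq phi_inj[of g s s'] g sV by simp
qed

definition inC :: "'v \<Rightarrow> bool" where
  "inC v \<longleftrightarrow> (\<exists>g\<in>carrier Gam. \<exists>s\<in>S. v = \<phi> g s)"
definition cg :: "'v \<Rightarrow> 'g" where
  "cg v = (SOME g. g \<in> carrier Gam \<and> (\<exists>s\<in>S. v = \<phi> g s))"
definition cs :: "'v \<Rightarrow> 'v" where
  "cs v = (SOME s. s \<in> S \<and> v = \<phi> (cg v) s)"

lemma cgcs: "inC v \<Longrightarrow> cg v \<in> carrier Gam \<and> cs v \<in> S \<and> v = \<phi> (cg v) (cs v)"
proof -
  assume "inC v"
  then have "\<exists>g. g \<in> carrier Gam \<and> (\<exists>s\<in>S. v = \<phi> g s)" unfolding inC_def by blast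
  then have 1: "cg v \<in> carrier Gam \<and> (\<exists>s\<in>S. v = \<phi> (cg v) s)" unfolding cg_def by (rule someI_ex)
  then have "\<exists>s. s \<in> S \<and> v = \<phi> (cg v) s" by blast
  then have "cs v \<in> S \<and> v = \<phi> (cg v) (cs v)" unfolding cs_def by (rule someI_ex)
  with 1 show ?thesis by blast
qed

lemma inC_phi: "g \<in> carrier Gam \<Longrightarrow> s \<in> S \<Longrightarrow> inC (\<phi> g s)"
  unfolding inC_def by blast

lemma cg_eq: "g \<in> carrier Gam \<Longrightarrow> s \<in> S \<Longrightarrow> cg (\<phi> g s) = g \<and> cs (\<phi> g s) = s"
proof -
  assume a: "g \<in> carrier Gam" "s \<in> S"
  then have "cg (\<phi> g s) \<in> carrier Gam \<and> cs (\<phi> g s) \<in> S \<and> \<phi> g s = \<phi> (cg (\<phi> g s)) (cs (\<phi> g s))"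
    using cgcs inC_phi by blast
  then show ?thesis using uniq a by metis
qed

lemma inC_V: "inC v \<Longrightarrow> v \<in> V"
  unfolding inC_def using phi_V SV by blast

lemma cls_in: "g \<in> carrier Gam \<Longrightarrow> s \<in> S \<Longrightarrow> cls (\<phi> g s) = \<phi> g ` S"
proof -
  assume a: "g \<in> carrier Gam" "s \<in> S"
  have "{\<phi> h ` S | h. h \<in> carrier Gam \<and> \<phi> g s \<in> \<phi> h ` S} = {\<phi> g ` S}"
  proof (intro equalityI subsetI)
    fix X assume "X \<in> {\<phi> h ` S | h. h \<in> carrier Gam \<and> \<phi> g s \<in> \<phi> h ` S}"
    then obtain h s' where "X = \<phi> h ` S" "h \<in> carrier Gam" "s' \<in> S" "\<phi> g s = \<phi> h s'" by blast
    then show "X \<in> {\<phi> g ` S}" using uniq a by blast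
  next
    fix X assume "X \<in> {\<phi> g ` S}"
    then show "X \<in> {\<phi> h ` S | h. h \<in> carrier Gam \<and> \<phi> g s \<in> \<phi> h ` S}" using a by blast
  qed
  then show ?thesis unfolding contr_class_def using a by auto
qed

lemma cls_out: "\<not> inC v \<Longrightarrow> cls v = {v}"
  unfolding contr_class_def inC_def by auto

lemma in_cls: "v \<in> cls v"
  unfolding contr_class_def by auto

lemma cls_V: "v \<in> V \<Longrightarrow> cls v \<in> V'"
  unfolding contr_V_def by blast

lemma notinC_phi: "v \<in> V \<Longrightarrow> \<not> inC v \<Longrightarrow> g \<in> carrier Gam \<Longrightarrow> \<not> inC (\<phi> g v)"
proof
  assume a: "v \<in> V" "\<not> inC v" "g \<in> carrier Gam" "inC (\<phi> g v)"
  then obtain h s where hs: "h \<in> carrier Gam" "s \<in> S" "\<phi> g v = \<phi> h s" unfolding inC_def by blast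
  have "v = \<phi> (inv\<^bsub>Gam\<^esub> g) (\<phi> g v)" using phi_inv a by simp
  also have "\<dots> = \<phi> (inv\<^bsub>Gam\<^esub> g \<otimes>\<^bsub>Gam\<^esub> h) s" using hs phi_mult a SV by auto
  finally have "inC v" unfolding inC_def using hs a by blast
  then show False using a by blast
qed

lemma S_cls: "cls s1 = S"
proof -
  have "s1 \<in> S" using Sdef by simp
  then have "cls (\<phi> \<one>\<^bsub>Gam\<^esub> s1) = \<phi> \<one>\<^bsub>Gam\<^esub> ` S" using cls_in by simp
  moreover have "\<phi> \<one>\<^bsub>Gam\<^esub> ` S = S" using phi_one SV by (auto simp: image_iff) (metis subsetD)+
  moreover have "\<phi> \<one>\<^bsub>Gam\<^esub> s1 = s1" using phi_one SV \<open>s1 \<in> S\<close> by blast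
  ultimately show ?thesis by simp
qed

lemma tau_orth: "g \<in> carrier Gam \<Longrightarrow> orthogonal_transformation (\<tau> g)"
  using rep unfolding cyl_sym_rep_def by simp
lemma tau_cyl: "g \<in> carrier Gam \<Longrightarrow> \<tau> g ` cylinder = cylinder"
  using rep unfolding cyl_sym_rep_def by simp
lemma tau_mult: "g \<in> carrier Gam \<Longrightarrow> h \<in> carrier Gam \<Longrightarrow> \<tau> (g \<otimes>\<^bsub>Gam\<^esub> h) x = \<tau> g (\<tau> h x)"
  using rep unfolding cyl_sym_rep_def by simp
lemma p'_sym: "g \<in> carrier Gam \<Longrightarrow> X \<in> V' \<Longrightarrow> \<tau> g (p' X) = p' (\<phi> g ` X)"
  using sf unfolding sym_framework_def contr_action_def by simp
lemma p'_cyl: "X \<in> V' \<Longrightarrow> p' X \<in> cylinder"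
  using fw unfolding cyl_framework_def by simp

definition q0 :: "real^3" where "q0 = p' S"
definition P :: "real \<Rightarrow> 'v \<Rightarrow> real^3" where
  "P e s = (if s = s1 then q0 else if s = s2 then Sh e q0 else if s = s3 then Rot e q0 else Sh e (Rot (-e) q0))"
definition pe :: "real \<Rightarrow> 'v \<Rightarrow> real^3" where
  "pe e v = (if inC v then \<tau> (cg v) (P e (cs v)) else p' {v})"

lemma S_V': "S \<in> V'"
proof -
  have "s1 \<in> V" using Sdef SV by auto
  then show ?thesis using cls_V[of s1] S_cls by simp
qed

lemma q0_cyl: "q0 \<in> cylinder"
  unfolding q0_def using p'_cyl[OF S_V'] .

lemma P_cyl: "P e s \<in> cylinder"
  unfolding P_def using q0_cyl by (simp add: Rot_cyl Sh_cyl)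

lemma P0: "P 0 s = q0"
  unfolding P_def by (simp add: Rot0 Sh0)

lemma pe_phi: "g \<in> carrier Gam \<Longrightarrow> s \<in> S \<Longrightarrow> pe e (\<phi> g s) = \<tau> g (P e s)"
  unfolding pe_def using inC_phi cg_eq by simp

lemma pe_sym: "g \<in> carrier Gam \<Longrightarrow> v \<in> V \<Longrightarrow> \<tau> g (pe e v) = pe e (\<phi> g v)"
proof -
  assume g: "g \<in> carrier Gam" and v: "v \<in> V"
  show ?thesis
  proof (cases "inC v")
    case True
    then have h: "cg v \<in> carrier Gam" "cs v \<in> S" "v = \<phi> (cg v) (cs v)" using cgcs by auto
    have "\<phi> g v = \<phi> (g \<otimes>\<^bsub>Gam\<^esub> cg v) (cs v)" using h g phi_mult SV by auto
    then have "pe e (\<phi> g v) = \<tau> (g \<otimes>\<^bsub>Gam\<^esub> cg v) (P e (cs v))" using pe_phi h g by simp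
    also have "\<dots> = \<tau> g (\<tau> (cg v) (P e (cs v)))" using tau_mult g h by simp
    also have "\<dots> = \<tau> g (pe e v)" using True unfolding pe_def by simp
    finally show ?thesis by simp
  next
    case False
    then have "\<not> inC (\<phi> g v)" using notinC_phi g v by blast
    then have "pe e (\<phi> g v) = p' {\<phi> g v}" unfolding pe_def by simp
    also have "\<dots> = \<tau> g (p' {v})" using p'_sym[of g "{v}"] cls_V[OF v] cls_out[OF False] g by simp
    finally show ?thesis using False unfolding pe_def by simp
  qed
qed

lemma pe_cyl: "v \<in> V \<Longrightarrow> pe e v \<in> cylinder"
proof -
  assume v: "v \<in> V"
  show ?thesis
  proof (cases "inC v")
    case True
    then have g: "cg v \<in> carrier Gam" using cgcs by blast
    have "\<tau> (cg v) (P e (cs v)) \<in> \<tau> (cg v) ` cylinder" by (rule imageI[OF P_cyl])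
    then show ?thesis unfolding pe_def using True tau_cyl[OF g] by simp
  next
    case False
    then show ?thesis unfolding pe_def using p'_cyl cls_V[OF v] cls_out by simp
  qed
qed

lemma pe0: "v \<in> V \<Longrightarrow> pe 0 v = p' (cls v)"
proof (cases "inC v")
  case True
  then have h: "cg v \<in> carrier Gam" "cs v \<in> S" "v = \<phi> (cg v) (cs v)" using cgcs by auto
  have "pe 0 v = \<tau> (cg v) q0" using True unfolding pe_def by (simp add: P0)
  also have "\<dots> = p' (\<phi> (cg v) ` S)" unfolding q0_def using p'_sym[OF h(1) S_V'] .
  also have "\<phi> (cg v) ` S = cls v" using cls_in[OF h(1,2)] h(3) by simp
  finally show ?thesis .
next
  case False
  then show ?thesis unfolding pe_def using cls_out by simp
qed

lemma P_tendsto: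
  fixes e :: "'a::t2_space \<Rightarrow> real"
  shows "(e \<longlongrightarrow> 0) F \<Longrightarrow> ((\<lambda>x. P (e x) s) \<longlongrightarrow> q0) F"
proof -
  assume e: "(e \<longlongrightarrow> 0) F"
  have 1: "((\<lambda>x. Sh (e x) q0) \<longlongrightarrow> q0) F" by (rule Sh_tendsto[OF e tendsto_const])
  have 2: "((\<lambda>x. Rot (e x) q0) \<longlongrightarrow> q0) F" by (rule Rot_tendsto[OF e])
  have 3: "((\<lambda>x. Sh (e x) (Rot (- e x) q0)) \<longlongrightarrow> q0) F" by (rule Sh_tendsto[OF e Rot_tendsto'[OF e]])
  show ?thesis unfolding P_def
    by (cases "s = s1"; cases "s = s2"; cases "s = s3") (simp_all add: 1 2 3)
qed

lemma pe_tendsto: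
  fixes e :: "'a::t2_space \<Rightarrow> real"
  assumes e: "(e \<longlongrightarrow> 0) F"
  shows "((\<lambda>x. pe (e x) v) \<longlongrightarrow> pe 0 v) F"
proof (cases "inC v")
  case True
  have "((\<lambda>x. \<tau> (cg v) (P (e x) (cs v))) \<longlongrightarrow> \<tau> (cg v) q0) F"
    using orth_tendsto[OF tau_orth P_tendsto[OF e]] cgcs[OF True] by blast
  then show ?thesis using True unfolding pe_def by (simp add: P0)
next
  case False
  then show ?thesis unfolding pe_def by simp
qed

end



lemma comp_AB:
  assumes P: "(P$1)^2 + (P$2)^2 = 1"
    and eq: "al *\<^sub>R Jv P + be *\<^sub>R e3 = vector [0, 0, a] + b *\<^sub>R vector [- (P $ 2), P $ 1, 0]"
  shows "al = b \<and> be = a"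
proof -
  have c1: "al * (- P$2) = b * (- P$2)" using arg_cong[OF eq, of "\<lambda>x. x $ 1"] by (simp add: Jv_def e3_def)
  have c2: "al * P$1 = b * P$1" using arg_cong[OF eq, of "\<lambda>x. x $ 2"] by (simp add: Jv_def e3_def)
  have c3: "be = a" using arg_cong[OF eq, of "\<lambda>x. x $ 3"] by (simp add: Jv_def e3_def)
  have "al - b = (al - b) * ((P$1)^2 + (P$2)^2)" using P by simp
  also have "\<dots> = (al * P$1 - b * P$1) * P$1 - (al * (- P$2) - b * (- P$2)) * P$2"
    by (simp add: power2_eq_square algebra_simps)
  also have "\<dots> = 0" using c1 c2 by (simp only: diff_self mult_zero_left)
  finally show ?thesis using c3 by simp
qed

context Lsetup begin

lemma edge_V: "{a, b} \<in> E \<Longrightarrow> a \<in> V \<and> b \<in> V \<and> a \<noteq> b"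
proof -
  assume ab: "{a, b} \<in> E"
  then obtain c d where "c \<in> V" "d \<in> V" "c \<noteq> d" "{a, b} = {c, d}"
    using sg unfolding simple_graph_def by blast
  then show ?thesis by (auto simp: doubleton_eq_iff)
qed

lemma finV: "finite V" using sg unfolding simple_graph_def by simp

lemma q0_unit: "(q0$1)^2 + (q0$2)^2 = 1" using q0_cyl by (simp add: cyl_iff)

lemma P_vals: "P e s1 = q0" "P e s2 = Sh e q0" "P e s3 = Rot e q0" "P e s4 = Sh e (Rot (-e) q0)"
  using dist by (auto simp: P_def)

lemma K4_copy:
  assumes e: "0 < e" "e < pi" and m: "motAB E (pe e) al be" and g: "g \<in> carrier Gam" and s: "s \<in> S"
  shows "al (\<phi> g s) = al (\<phi> g s1) \<and> be (\<phi> g s) = be (\<phi> g s1)"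
proof -
  obtain d c where dc: "d \<noteq> 0" "c \<noteq> 0" "\<forall>x y. kap (\<tau> g x) (\<tau> g y) = d * kap x y" "\<forall>x. \<tau> g x $ 3 = c * x $ 3"
    using Tstruct[OF tau_orth[OF g] tau_cyl[OF g]] by blast
  have edge: "- (d * kap (P e a) (P e b)) * (al (\<phi> g a) - al (\<phi> g b))
      + c * (P e a $ 3 - P e b $ 3) * (be (\<phi> g a) - be (\<phi> g b)) = 0"
    if ab: "a \<in> S" "b \<in> S" "a \<noteq> b" for a b
  proof -
    have "{a, b} \<in> E" using K4 ab by blast
    then have "{\<phi> g a, \<phi> g b} \<in> E" using phi_edge g ab SV by blast
    then have "- kap (pe e (\<phi> g a)) (pe e (\<phi> g b)) * (al (\<phi> g a) - al (\<phi> g b))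
        + (pe e (\<phi> g a) $ 3 - pe e (\<phi> g b) $ 3) * (be (\<phi> g a) - be (\<phi> g b)) = 0"
      using m unfolding motAB_def by blast
    then have "- kap (\<tau> g (P e a)) (\<tau> g (P e b)) * (al (\<phi> g a) - al (\<phi> g b))
        + (\<tau> g (P e a) $ 3 - \<tau> g (P e b) $ 3) * (be (\<phi> g a) - be (\<phi> g b)) = 0"
      by (simp only: pe_phi[OF g ab(1)] pe_phi[OF g ab(2)])
    then show ?thesis by (rule K4_conv[OF dc(3) dc(4)])
  qed
  have sS: "s1 \<in> S" "s2 \<in> S" "s3 \<in> S" "s4 \<in> S" using Sdef by auto
  have d: "s1 \<noteq> s2" "s1 \<noteq> s3" "s1 \<noteq> s4" "s2 \<noteq> s3" "s2 \<noteq> s4" "s3 \<noteq> s4" using dist by auto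
  note E12 = edge[OF sS(1) sS(2) d(1), unfolded P_vals]
  note E13 = edge[OF sS(1) sS(3) d(2), unfolded P_vals]
  note E14 = edge[OF sS(1) sS(4) d(3), unfolded P_vals]
  note E23 = edge[OF sS(2) sS(3) d(4), unfolded P_vals]
  note E24 = edge[OF sS(2) sS(4) d(5), unfolded P_vals]
  note E34 = edge[OF sS(3) sS(4) d(6), unfolded P_vals]
  have R: "al (\<phi> g s2) = al (\<phi> g s1) \<and> al (\<phi> g s3) = al (\<phi> g s1) \<and> al (\<phi> g s4) = al (\<phi> g s1) \<and>
    be (\<phi> g s2) = be (\<phi> g s1) \<and> be (\<phi> g s3) = be (\<phi> g s1) \<and> be (\<phi> g s4) = be (\<phi> g s1)"
    by (rule K4_base[OF q0_unit e dc(1) dc(2) E12 E13 E14 E23 E24 E34])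
  have "s = s1 \<or> s = s2 \<or> s = s3 \<or> s = s4" using s Sdef by auto
  then show ?thesis using R by auto
qed

lemma cls_const:
  assumes e: "0 < e" "e < pi" and m: "motAB E (pe e) al be" and v: "v \<in> V" and w: "w \<in> V"
    and c: "cls v = cls w"
  shows "al v = al w \<and> be v = be w"
proof (cases "inC v")
  case True
  then have h: "cg v \<in> carrier Gam" "cs v \<in> S" "v = \<phi> (cg v) (cs v)" using cgcs by auto
  have "w \<in> cls v" using in_cls[of w] c by simp
  also have "cls v = \<phi> (cg v) ` S" using cls_in[OF h(1,2)] h(3) by simp
  finally obtain s' where s': "s' \<in> S" "w = \<phi> (cg v) s'" by blast
  have 1: "al v = al (\<phi> (cg v) s1) \<and> be v = be (\<phi> (cg v) s1)"
    using K4_copy[OF e m h(1) h(2)] h(3) by simp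
  have 2: "al w = al (\<phi> (cg v) s1) \<and> be w = be (\<phi> (cg v) s1)"
    using K4_copy[OF e m h(1) s'(1)] s'(2) by simp
  show ?thesis using 1 2 by simp
next
  case False
  then have "w \<in> {v}" using in_cls[of w] c cls_out[OF False] by simp
  then show ?thesis by simp
qed

lemma P_dist:
  assumes e: "0 < e" "e < pi" and s: "s \<in> S" "s' \<in> S" "s \<noteq> s'"
  shows "P e s \<noteq> P e s'"
proof -
  have sn: "sin e \<noteq> 0" using e sin_gt_zero by fastforce
  have q: "(q0$1)^2 + (q0$2)^2 = 1" by (rule q0_unit)
  define f where "f X = (kap q0 X, X $ 3)" for X
  have k3: "kap q0 (Rot e q0) = sin e"
  proof -
    have "kap q0 (Rot e q0) = sin e * ((q0$1)^2 + (q0$2)^2)"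
      by (simp add: Rot_def kap_def power2_eq_square algebra_simps)
    then show ?thesis using q by simp
  qed
  have k4: "kap q0 (Sh e (Rot (-e) q0)) = - sin e"
  proof -
    have "kap q0 (Sh e (Rot (-e) q0)) = - sin e * ((q0$1)^2 + (q0$2)^2)"
      by (simp add: Rot_def Sh_def kap_def power2_eq_square algebra_simps)
    then show ?thesis using q by simp
  qed
  have k1: "kap q0 q0 = 0" "kap q0 (Sh e q0) = 0" by (simp_all add: kap_def Sh_def algebra_simps)
  have fv: "f (P e s1) = (0, q0$3)" "f (P e s2) = (0, q0$3 + e)" "f (P e s3) = (sin e, q0$3)"
    "f (P e s4) = (- sin e, q0$3 + e)"
    unfolding f_def P_vals using k1 k3 k4 by (simp_all add: Rot_def Sh_def)
  have "f (P e s) \<noteq> f (P e s')"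
    using s fv sn e(1) Sdef by auto
  then show ?thesis by auto
qed

lemma fw_e:
  assumes e: "0 < e" "e < pi" and D: "\<forall>a b. {a, b} \<in> E \<and> cls a \<noteq> cls b \<longrightarrow> pe e a \<noteq> pe e b"
  shows "cyl_framework V E (pe e)"
  unfolding cyl_framework_def
proof (intro conjI allI impI ballI)
  fix v assume "v \<in> V" then show "pe e v \<in> cylinder" by (rule pe_cyl)
next
  fix a b assume ab: "{a, b} \<in> E"
  then have V: "a \<in> V" "b \<in> V" "a \<noteq> b" using edge_V by auto
  show "pe e a \<noteq> pe e b"
  proof (cases "cls a = cls b")
    case False then show ?thesis using D ab by blast
  next
    case True
    show ?thesis
    proof (cases "inC a")
      case inA: True
      then have h: "cg a \<in> carrier Gam" "cs a \<in> S" "a = \<phi> (cg a) (cs a)" using cgcs by auto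
      have "b \<in> cls a" using in_cls[of b] True by simp
      also have "cls a = \<phi> (cg a) ` S" using cls_in[OF h(1,2)] h(3) by simp
      finally obtain s' where s': "s' \<in> S" "b = \<phi> (cg a) s'" by blast
      have ne: "cs a \<noteq> s'" using V(3) h(3) s'(2) by auto
      have "P e (cs a) \<noteq> P e s'" by (rule P_dist[OF e h(2) s'(1) ne])
      then have "\<tau> (cg a) (P e (cs a)) \<noteq> \<tau> (cg a) (P e s')"
        using orthogonal_transformation_inj[OF tau_orth[OF h(1)]] unfolding inj_def by blast
      then show ?thesis using pe_phi[OF h(1) h(2)] pe_phi[OF h(1) s'(1)] h(3) s'(2) by simp
    next
      case False
      then have "b \<in> {a}" using in_cls[of b] True cls_out[OF False] by simp
      then show ?thesis using V(3) by simp
    qed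
  qed
qed

lemma ev_dist:
  "\<exists>d>0. \<forall>e. 0 < e \<and> e < d \<longrightarrow> e < pi \<and> (\<forall>a b. {a, b} \<in> E \<and> cls a \<noteq> cls b \<longrightarrow> pe e a \<noteq> pe e b)"
proof -
  define Pr where "Pr = {(a, b). a \<in> V \<and> b \<in> V \<and> {a, b} \<in> E \<and> cls a \<noteq> cls b}"
  have finPr: "finite Pr"
  proof -
    have "Pr \<subseteq> V \<times> V" unfolding Pr_def by auto
    then show ?thesis using finV finite_subset by blast
  qed
  have ev1: "\<forall>y\<in>Pr. eventually (\<lambda>x. pe x (fst y) \<noteq> pe x (snd y)) (at_right (0::real))"
  proof
    fix y assume y: "y \<in> Pr"
    obtain a b where ab: "y = (a, b)" "a \<in> V" "b \<in> V" "{a, b} \<in> E" "cls a \<noteq> cls b"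
      using y unfolding Pr_def by blast
    have "{cls a, cls b} \<in> E'" unfolding contr_E_def using ab by blast
    then have "p' (cls a) \<noteq> p' (cls b)" using fw unfolding cyl_framework_def by blast
    then have ne: "pe 0 a - pe 0 b \<noteq> 0" using pe0 ab by simp
    have id: "((\<lambda>x::real. x) \<longlongrightarrow> 0) (at_right 0)" by (rule tendsto_ident_at)
    have "((\<lambda>x. pe x a - pe x b) \<longlongrightarrow> pe 0 a - pe 0 b) (at_right 0)"
      by (rule tendsto_diff[OF pe_tendsto[OF id] pe_tendsto[OF id]])
    then have "eventually (\<lambda>x. pe x a - pe x b \<noteq> 0) (at_right 0)"
      by (rule tendsto_imp_eventually_ne[OF _ ne])
    then show "eventually (\<lambda>x. pe x (fst y) \<noteq> pe x (snd y)) (at_right 0)"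
      using ab(1) by (simp add: eventually_mono)
  qed
  have ev2: "eventually (\<lambda>x. \<forall>y\<in>Pr. pe x (fst y) \<noteq> pe x (snd y)) (at_right (0::real))"
    by (rule eventually_ball_finite[OF finPr ev1])
  have ev3: "eventually (\<lambda>x::real. x < pi) (at_right 0)"
    unfolding eventually_at_right_field using pi_gt_zero by blast
  have "eventually (\<lambda>x. x < pi \<and> (\<forall>y\<in>Pr. pe x (fst y) \<noteq> pe x (snd y))) (at_right (0::real))"
    using ev2 ev3 by (simp add: eventually_conj_iff)
  then obtain d where d: "d > 0" "\<forall>x>0. x < d \<longrightarrow> x < pi \<and> (\<forall>y\<in>Pr. pe x (fst y) \<noteq> pe x (snd y))"
    unfolding eventually_at_right_field by auto
  show ?thesis
  proof (intro exI conjI allI impI)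
    show "d > 0" by (rule d(1))
  next
    fix e :: real assume e: "0 < e \<and> e < d"
    then show "e < pi" using d(2) by blast
  next
    fix e :: real and a b assume e: "0 < e \<and> e < d" and ab: "{a, b} \<in> E \<and> cls a \<noteq> cls b"
    then have "(a, b) \<in> Pr" unfolding Pr_def using edge_V by blast
    then show "pe e a \<noteq> pe e b" using d(2) e by fastforce
  qed
qed

end



context Lsetup begin

lemma normalize:
  assumes e: "0 < e" "e < pi" and nr: "\<not> cyl_inf_rigid V E (pe e)"
  shows "\<exists>al be. motAB E (pe e) al be \<and> al s1 = 0 \<and> be s1 = 0 \<and> (\<Sum>v\<in>V. \<bar>al v\<bar> + \<bar>be v\<bar>) = 1"
proof -
  obtain u where u: "cyl_inf_motion V E (pe e) u"
    and nt: "\<not> (\<exists>a b::real. \<forall>v\<in>V. u v = vector [0, 0, a] + b *\<^sub>R vector [- (pe e v $ 2), pe e v $ 1, 0])"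
    using nr unfolding cyl_inf_rigid_def by blast
  define a0 where "a0 v = - (pe e v $ 2) * u v $ 1 + pe e v $ 1 * u v $ 2" for v
  define b0 where "b0 v = u v $ 3" for v
  have unit: "\<And>v. v \<in> V \<Longrightarrow> (pe e v $ 1)^2 + (pe e v $ 2)^2 = 1" using pe_cyl by (simp add: cyl_iff)
  have dec: "\<And>v. v \<in> V \<Longrightarrow> u v = a0 v *\<^sub>R Jv (pe e v) + b0 v *\<^sub>R e3"
  proof -
    fix v assume v: "v \<in> V"
    have "vector [pe e v $ 1, pe e v $ 2, 0] \<bullet> u v = 0" using u v unfolding cyl_inf_motion_def by blast
    then show "u v = a0 v *\<^sub>R Jv (pe e v) + b0 v *\<^sub>R e3"
      unfolding a0_def b0_def by (rule decomp[OF unit[OF v]])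
  qed
  have m0: "motAB E (pe e) a0 b0"
    unfolding motAB_def
  proof (intro allI impI)
    fix a b assume ab: "{a, b} \<in> E"
    then have V: "a \<in> V" "b \<in> V" using edge_V by auto
    have "(pe e a - pe e b) \<bullet> u a + (pe e b - pe e a) \<bullet> u b = 0" using u ab unfolding cyl_inf_motion_def by blast
    then show "- kap (pe e a) (pe e b) * (a0 a - a0 b) + (pe e a $ 3 - pe e b $ 3) * (b0 a - b0 b) = 0"
      unfolding dec[OF V(1)] dec[OF V(2)] edge_id .
  qed
  have s1V: "s1 \<in> V" using Sdef SV by auto
  have nc: "\<exists>v\<in>V. a0 v \<noteq> a0 s1 \<or> b0 v \<noteq> b0 s1"
  proof (rule ccontr)
    assume "\<not> (\<exists>v\<in>V. a0 v \<noteq> a0 s1 \<or> b0 v \<noteq> b0 s1)"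
    then have all: "\<forall>v\<in>V. a0 v = a0 s1 \<and> b0 v = b0 s1" by blast
    have "\<forall>v\<in>V. u v = vector [0, 0, b0 s1] + a0 s1 *\<^sub>R vector [- (pe e v $ 2), pe e v $ 1, 0]"
    proof
      fix v assume v: "v \<in> V"
      have "u v = a0 s1 *\<^sub>R Jv (pe e v) + b0 s1 *\<^sub>R e3" using dec[OF v] all v by simp
      then show "u v = vector [0, 0, b0 s1] + a0 s1 *\<^sub>R vector [- (pe e v $ 2), pe e v $ 1, 0]"
        by (simp add: vec_eq_iff forall_3 Jv_def e3_def)
    qed
    then show False using nt by blast
  qed
  define N where "N = (\<Sum>v\<in>V. \<bar>a0 v - a0 s1\<bar> + \<bar>b0 v - b0 s1\<bar>)"
  have Npos: "N > 0"
  proof -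
    obtain v where v: "v \<in> V" "a0 v \<noteq> a0 s1 \<or> b0 v \<noteq> b0 s1" using nc by blast
    have "0 < \<bar>a0 v - a0 s1\<bar> + \<bar>b0 v - b0 s1\<bar>" using v(2) by auto
    also have "\<dots> \<le> N" unfolding N_def by (rule member_le_sum[OF v(1)]) (auto simp: finV)
    finally show ?thesis .
  qed
  define al where "al v = (a0 v - a0 s1) / N" for v
  define be where "be v = (b0 v - b0 s1) / N" for v
  have m: "motAB E (pe e) al be"
    unfolding motAB_def
  proof (intro allI impI)
    fix a b assume ab: "{a, b} \<in> E"
    have h: "- kap (pe e a) (pe e b) * (a0 a - a0 b) + (pe e a $ 3 - pe e b $ 3) * (b0 a - b0 b) = 0"
      using m0 ab unfolding motAB_def by blast
    have "- kap (pe e a) (pe e b) * (al a - al b) + (pe e a $ 3 - pe e b $ 3) * (be a - be b)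
      = (- kap (pe e a) (pe e b) * (a0 a - a0 b) + (pe e a $ 3 - pe e b $ 3) * (b0 a - b0 b)) / N"
      unfolding al_def be_def using Npos by (simp add: field_simps)
    then show "- kap (pe e a) (pe e b) * (al a - al b) + (pe e a $ 3 - pe e b $ 3) * (be a - be b) = 0"
      using h by simp
  qed
  have "(\<Sum>v\<in>V. \<bar>al v\<bar> + \<bar>be v\<bar>) = (\<Sum>v\<in>V. (\<bar>a0 v - a0 s1\<bar> + \<bar>b0 v - b0 s1\<bar>) / N)"
    unfolding al_def be_def using Npos by (simp add: abs_divide add_divide_distrib)
  also have "\<dots> = (\<Sum>v\<in>V. \<bar>a0 v - a0 s1\<bar> + \<bar>b0 v - b0 s1\<bar>) / N" by (simp only: sum_divide_distrib)
  also have "\<dots> = 1" using Npos unfolding N_def[symmetric] by simp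
  finally have sum1: "(\<Sum>v\<in>V. \<bar>al v\<bar> + \<bar>be v\<bar>) = 1" .
  have z: "al s1 = 0" "be s1 = 0" unfolding al_def be_def by simp_all
  show ?thesis using m sum1 z by blast
qed

end



context Lsetup begin

lemma main: "tau_rigid Gam V E \<phi> \<tau>"
proof -
  obtain d where d: "d > 0"
    and D: "\<forall>e. 0 < e \<and> e < d \<longrightarrow> e < pi \<and> (\<forall>a b. {a, b} \<in> E \<and> cls a \<noteq> cls b \<longrightarrow> pe e a \<noteq> pe e b)"
    using ev_dist by blast
  have symf: "\<And>e. sym_framework Gam V \<phi> \<tau> (pe e)"
    unfolding sym_framework_def using pe_sym by blast
  have s1V: "s1 \<in> V" using Sdef SV by auto
  have "\<exists>e. 0 < e \<and> e < d \<and> cyl_inf_rigid V E (pe e)"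
  proof (rule ccontr)
    assume na: "\<not> (\<exists>e. 0 < e \<and> e < d \<and> cyl_inf_rigid V E (pe e))"
    define ek where "ek k = d / 2 * inverse (real (Suc k))" for k
    have ek: "\<And>k. 0 < ek k \<and> ek k < d"
    proof -
      fix k
      have "inverse (real (Suc k)) \<le> 1" by (simp add: inverse_le_1_iff)
      then have "ek k \<le> d / 2" unfolding ek_def using d by (simp add: mult_left_le)
      then show "0 < ek k \<and> ek k < d" unfolding ek_def using d by simp
    qed
    have ekpi: "\<And>k. ek k < pi" using D ek by blast
    have ek0: "ek \<longlonglongrightarrow> 0"
    proof -
      have "(\<lambda>k. d / 2 * inverse (real (Suc k))) \<longlonglongrightarrow> d / 2 * 0"
        by (rule tendsto_mult[OF tendsto_const LIMSEQ_inverse_real_of_nat])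
      then show ?thesis unfolding ek_def by simp
    qed
    have ex: "\<forall>k. \<exists>al be. motAB E (pe (ek k)) al be \<and> al s1 = 0 \<and> be s1 = 0 \<and> (\<Sum>v\<in>V. \<bar>al v\<bar> + \<bar>be v\<bar>) = 1"
    proof
      fix k
      have "\<not> cyl_inf_rigid V E (pe (ek k))" using na ek by blast
      then show "\<exists>al be. motAB E (pe (ek k)) al be \<and> al s1 = 0 \<and> be s1 = 0 \<and> (\<Sum>v\<in>V. \<bar>al v\<bar> + \<bar>be v\<bar>) = 1"
        using normalize ek ekpi by blast
    qed
    then obtain A B where AB: "\<And>k. motAB E (pe (ek k)) (A k) (B k) \<and> A k s1 = 0 \<and> B k s1 = 0
        \<and> (\<Sum>v\<in>V. \<bar>A k v\<bar> + \<bar>B k v\<bar>) = 1"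
      by metis
    have cc: "\<And>k v w. v \<in> V \<Longrightarrow> w \<in> V \<Longrightarrow> cls v = cls w \<Longrightarrow> A k v = A k w \<and> B k v = B k w"
      using cls_const ek ekpi AB by blast
    have bdA: "\<And>k v. v \<in> V \<Longrightarrow> \<bar>A k v\<bar> \<le> 1" and bdB: "\<And>k v. v \<in> V \<Longrightarrow> \<bar>B k v\<bar> \<le> 1"
    proof -
      fix k v assume v: "v \<in> V"
      have "\<bar>A k v\<bar> + \<bar>B k v\<bar> \<le> (\<Sum>v\<in>V. \<bar>A k v\<bar> + \<bar>B k v\<bar>)"
        by (rule member_le_sum[OF v]) (auto simp: finV)
      then have le: "\<bar>A k v\<bar> + \<bar>B k v\<bar> \<le> 1" using AB by simp
      then show "\<bar>A k v\<bar> \<le> 1" by (smt (verit) abs_ge_zero)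
      show "\<bar>B k v\<bar> \<le> 1" using le by (smt (verit) abs_ge_zero)
    qed
    obtain r1 lA where r1: "strict_mono r1" and lA: "\<forall>v\<in>V. (\<lambda>k. A (r1 k) v) \<longlonglongrightarrow> lA v"
      using BW_finite[OF finV, of A 1] bdA by blast
    obtain r2 lB where r2: "strict_mono r2" and lB: "\<forall>v\<in>V. (\<lambda>k. B (r1 (r2 k)) v) \<longlonglongrightarrow> lB v"
      using BW_finite[OF finV, of "\<lambda>k. B (r1 k)" 1] bdB by blast
    define r where "r = r1 \<circ> r2"
    have r: "strict_mono r" unfolding r_def by (metis r1 r2 strict_mono_o)
    have cA: "\<And>v. v \<in> V \<Longrightarrow> (\<lambda>k. A (r k) v) \<longlonglongrightarrow> lA v"
    proof -
      fix v assume "v \<in> V"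
      then have "((\<lambda>k. A (r1 k) v) \<circ> r2) \<longlonglongrightarrow> lA v" using lA r2 LIMSEQ_subseq_LIMSEQ by blast
      then show "(\<lambda>k. A (r k) v) \<longlonglongrightarrow> lA v" unfolding r_def by (simp add: comp_def)
    qed
    have cB: "\<And>v. v \<in> V \<Longrightarrow> (\<lambda>k. B (r k) v) \<longlonglongrightarrow> lB v"
      using lB unfolding r_def by (simp add: comp_def)
    have er: "(\<lambda>k. ek (r k)) \<longlonglongrightarrow> 0"
      using LIMSEQ_subseq_LIMSEQ[OF ek0 r] by (simp add: comp_def)
    have cp: "\<And>v. (\<lambda>k. pe (ek (r k)) v) \<longlonglongrightarrow> pe 0 v"
      by (rule pe_tendsto[OF er])
    have L1: "lA s1 = 0" "lB s1 = 0"
    proof -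
      have "(\<lambda>k. A (r k) s1) = (\<lambda>k. 0)" "(\<lambda>k. B (r k) s1) = (\<lambda>k. 0)" using AB by auto
      then show "lA s1 = 0" "lB s1 = 0" using cA[OF s1V] cB[OF s1V]
        by (metis LIMSEQ_unique tendsto_const)+
    qed
    have L2: "(\<Sum>v\<in>V. \<bar>lA v\<bar> + \<bar>lB v\<bar>) = 1"
    proof -
      have "(\<lambda>k. \<Sum>v\<in>V. \<bar>A (r k) v\<bar> + \<bar>B (r k) v\<bar>) \<longlonglongrightarrow> (\<Sum>v\<in>V. \<bar>lA v\<bar> + \<bar>lB v\<bar>)"
        by (rule tendsto_sum) (intro tendsto_add tendsto_rabs cA cB; assumption)
      moreover have "(\<lambda>k. \<Sum>v\<in>V. \<bar>A (r k) v\<bar> + \<bar>B (r k) v\<bar>) = (\<lambda>k. 1)" using AB by auto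
      ultimately show ?thesis by (metis LIMSEQ_unique tendsto_const)
    qed
    have L3: "\<And>v w. v \<in> V \<Longrightarrow> w \<in> V \<Longrightarrow> cls v = cls w \<Longrightarrow> lA v = lA w \<and> lB v = lB w"
    proof -
      fix v w assume vw: "v \<in> V" "w \<in> V" "cls v = cls w"
      have "(\<lambda>k. A (r k) v) = (\<lambda>k. A (r k) w)" "(\<lambda>k. B (r k) v) = (\<lambda>k. B (r k) w)"
        using cc[OF vw] by auto
      then show "lA v = lA w \<and> lB v = lB w" using cA cB vw by (metis LIMSEQ_unique)
    qed
    have L4: "motAB E (pe 0) lA lB"
      unfolding motAB_def
    proof (intro allI impI)
      fix a b assume ab: "{a, b} \<in> E"
      then have V: "a \<in> V" "b \<in> V" using edge_V by auto
      define X where "X k = - kap (pe (ek (r k)) a) (pe (ek (r k)) b) * (A (r k) a - A (r k) b)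
         + (pe (ek (r k)) a $ 3 - pe (ek (r k)) b $ 3) * (B (r k) a - B (r k) b)" for k
      have "X \<longlonglongrightarrow> - kap (pe 0 a) (pe 0 b) * (lA a - lA b) + (pe 0 a $ 3 - pe 0 b $ 3) * (lB a - lB b)"
        unfolding X_def kap_def
        by (intro tendsto_add tendsto_mult tendsto_minus tendsto_diff tendsto_vec_nth cp cA cB V)
      moreover have "X = (\<lambda>k. 0)" using AB ab unfolding X_def motAB_def by auto
      ultimately show "- kap (pe 0 a) (pe 0 b) * (lA a - lA b) + (pe 0 a $ 3 - pe 0 b $ 3) * (lB a - lB b) = 0"
        by (metis LIMSEQ_unique tendsto_const)
    qed
    define rp where "rp X = (SOME v. v \<in> V \<and> cls v = X)" for X
    define al' where "al' X = lA (rp X)" for X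
    define be' where "be' X = lB (rp X)" for X
    have rpc: "\<And>v. v \<in> V \<Longrightarrow> al' (cls v) = lA v \<and> be' (cls v) = lB v"
    proof -
      fix v assume v: "v \<in> V"
      have "\<exists>w. w \<in> V \<and> cls w = cls v" using v by blast
      then have "rp (cls v) \<in> V \<and> cls (rp (cls v)) = cls v" unfolding rp_def by (rule someI_ex)
      then show "al' (cls v) = lA v \<and> be' (cls v) = lB v" unfolding al'_def be'_def using L3 v by blast
    qed
    have m': "motAB E' p' al' be'"
      unfolding motAB_def
    proof (intro allI impI)
      fix X Y assume XY: "{X, Y} \<in> E'"
      then obtain a b where ab: "{X, Y} = {cls a, cls b}" "{a, b} \<in> E" "cls a \<noteq> cls b"
        unfolding contr_E_def by blast
      have V: "a \<in> V" "b \<in> V" using edge_V ab(2) by auto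
      have ba: "{b, a} \<in> E" using ab(2) by (simp add: insert_commute)
      have h1: "- kap (pe 0 a) (pe 0 b) * (lA a - lA b) + (pe 0 a $ 3 - pe 0 b $ 3) * (lB a - lB b) = 0"
        using L4 ab(2) unfolding motAB_def by blast
      have h2: "- kap (pe 0 b) (pe 0 a) * (lA b - lA a) + (pe 0 b $ 3 - pe 0 a $ 3) * (lB b - lB a) = 0"
        using L4 ba unfolding motAB_def by blast
      have "(X = cls a \<and> Y = cls b) \<or> (X = cls b \<and> Y = cls a)" using ab(1) by (auto simp: doubleton_eq_iff)
      then show "- kap (p' X) (p' Y) * (al' X - al' Y) + (p' X $ 3 - p' Y $ 3) * (be' X - be' Y) = 0"
      proof
        assume "X = cls a \<and> Y = cls b"
        then show ?thesis using h1 rpc[OF V(1)] rpc[OF V(2)] pe0[OF V(1)] pe0[OF V(2)] by simp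
      next
        assume "X = cls b \<and> Y = cls a"
        then show ?thesis using h2 rpc[OF V(1)] rpc[OF V(2)] pe0[OF V(1)] pe0[OF V(2)] by simp
      qed
    qed
    have "cyl_inf_motion V' E' p' (\<lambda>X. al' X *\<^sub>R Jv (p' X) + be' X *\<^sub>R e3)"
      by (rule fromAB[OF m'])
    then obtain a b where ab: "\<forall>X\<in>V'. al' X *\<^sub>R Jv (p' X) + be' X *\<^sub>R e3
        = vector [0, 0, a] + b *\<^sub>R vector [- (p' X $ 2), p' X $ 1, 0]"
      using ri unfolding cyl_inf_rigid_def by blast
    have const: "\<And>v. v \<in> V \<Longrightarrow> lA v = b \<and> lB v = a"
    proof -
      fix v assume v: "v \<in> V"
      have X: "cls v \<in> V'" by (rule cls_V[OF v])
      have "(p' (cls v) $ 1)^2 + (p' (cls v) $ 2)^2 = 1" using p'_cyl[OF X] by (simp add: cyl_iff)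
      then have "al' (cls v) = b \<and> be' (cls v) = a" using comp_AB ab X by blast
      then show "lA v = b \<and> lB v = a" using rpc[OF v] by simp
    qed
    have "b = 0" "a = 0" using const[OF s1V] L1 by auto
    then have "(\<Sum>v\<in>V. \<bar>lA v\<bar> + \<bar>lB v\<bar>) = 0" using const by simp
    then show False using L2 by simp
  qed
  then obtain e where e: "0 < e" "e < d" "cyl_inf_rigid V E (pe e)" by blast
  have "cyl_framework V E (pe e)" using fw_e D e by blast
  then show ?thesis unfolding tau_rigid_def using symf e(3) by blast
qed

end


lemma card4_elems:
  assumes "card S = 4"
  shows "\<exists>a b c d. S = {a, b, c, d} \<and> distinct [a, b, c, d]"
proof -
  have "card S = Suc (Suc (Suc (Suc 0)))" using assms by simp
  then show ?thesis by (auto simp: card_Suc_eq)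
qed

theorem lemma4p4:
  fixes Gam :: "('g, 'm) monoid_scheme"
    and V :: "'v set" and E :: "'v set set"
    and \<phi> :: "'g \<Rightarrow> 'v \<Rightarrow> 'v" and \<tau> :: "'g \<Rightarrow> real^3 \<Rightarrow> real^3"
    and S :: "'v set"
  assumes "group Gam" and "finite (carrier Gam)"
    and "simple_graph V E"
    and "sym_graph Gam V E \<phi>"
    and "cyl_sym_rep Gam \<tau>"
    and "S \<subseteq> V" and "card S = 4"
    and "\<forall>a\<in>S. \<forall>b\<in>S. a \<noteq> b \<longrightarrow> {a, b} \<in> E"
    and "\<forall>g\<in>carrier Gam. g \<noteq> \<one>\<^bsub>Gam\<^esub> \<longrightarrow> \<phi> g ` S \<inter> S = {}"
    and "contr_simple Gam E \<phi> S"
    and "tau_rigid Gam (contr_V Gam V \<phi> S) (contr_E Gam E \<phi> S) (contr_action \<phi>) \<tau>"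
  shows "tau_rigid Gam V E \<phi> \<tau>"
proof -
  obtain s1 s2 s3 s4 where S: "S = {s1, s2, s3, s4}" "distinct [s1, s2, s3, s4]"
    using card4_elems[OF assms(7)] by blast
  obtain p' where p': "cyl_framework (contr_V Gam V \<phi> S) (contr_E Gam E \<phi> S) p'"
    "sym_framework Gam (contr_V Gam V \<phi> S) (contr_action \<phi>) \<tau> p'"
    "cyl_inf_rigid (contr_V Gam V \<phi> S) (contr_E Gam E \<phi> S) p'"
    using assms(11) unfolding tau_rigid_def by blast
  have L: "Lsetup Gam V E \<phi> \<tau> S p' s1 s2 s3 s4"
    by (intro Lsetup.intro Lsetup_axioms.intro assms(1) assms(3) assms(4) assms(5) assms(6) assms(8) assms(9)
        S p')
  show ?thesis by (rule Lsetup.main[OF L])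
qed

end
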